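(* In $\mathrm{HMF}(\mathbb{C}^2,\Gamma_W,W)$ the object $K_f$ is exceptional and is orthogonal to each $K_{y,j}$, $1\le j\le q-1$.
   Context: Let $p,q\ge2$ be integers and $W=x^py+y^q$. Let $L$ be the abelian group generated by $\vec x,\vec y,\vec c$ modulo $p\vec x+\vec y=q\vec y=\vec c$; $S=\mathbb{C}[x,y]$ is $L$-graded with $\deg x=\vec x$, $\deg y=\vec y$, and $R=S/(W)$; $M(l)_k=M_{k+l}$. $\mathrm{HMF}(\mathbb{C}^2,\Gamma_W,W)$ is the homotopy category of $L$-graded matrix factorisations of $W$, equivalent to $D^b(\mathrm{gr}R)/\mathrm{Perf}(\mathrm{gr}R)$, in which a finitely generated $L$-graded $R$-module is identified with its stabilisation; $\mathrm{Hom}^n(X,Y)=\mathrm{Hom}(X,Y[n])$. Let $f=x^p+y^{q-1}$, $K_f=R/(f)$, $K_y=R/(y)$, $K_{y,j}=K_y((j+1-q)\vec y)$. Exceptional means graded endomorphisms are scalars in degree $0$; orthogonal means all graded morphisms in both directions vanish. *)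

theory Defs
  imports Complex_Main "HOL-Computational_Algebra.Polynomial"
begin

text \<open>Polynomials in C[x,y] are represented as complex poly poly:
  the outer variable is y, the inner (coefficient) variable is x.
  The coefficient of x^i y^j of P is coeff (coeff P j) i.\<close>

type_synonym bpoly = "complex poly poly"

definition Xv :: bpoly where "Xv = [: monom 1 1 :]"
definition Yv :: bpoly where "Yv = monom 1 1"

definition Wpoly :: "nat \<Rightarrow> nat \<Rightarrow> bpoly" where
  "Wpoly p q = Xv ^ p * Yv + Yv ^ q"

definition fpoly :: "nat \<Rightarrow> nat \<Rightarrow> bpoly" where
  "fpoly p q = Xv ^ p + Yv ^ (q - 1)"

text \<open>The group L: elements of Z^3 = coefficients of (x,y,c), modulo the subgroup
  generated by (p,1,-1) and (0,q,-1), i.e. p x + y = c and q y = c.\<close>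

type_synonym lat = "int \<times> int \<times> int"

definition ladd :: "lat \<Rightarrow> lat \<Rightarrow> lat" where
  "ladd l m = (fst l + fst m, fst (snd l) + fst (snd m), snd (snd l) + snd (snd m))"
definition lneg :: "lat \<Rightarrow> lat" where
  "lneg l = (- fst l, - fst (snd l), - snd (snd l))"
definition lsub :: "lat \<Rightarrow> lat \<Rightarrow> lat" where
  "lsub l m = ladd l (lneg m)"
definition lsmul :: "int \<Rightarrow> lat \<Rightarrow> lat" where
  "lsmul k l = (k * fst l, k * fst (snd l), k * snd (snd l))"

definition Lx :: lat where "Lx = (1, 0, 0)"
definition Ly :: lat where "Ly = (0, 1, 0)"
definition Lc :: lat where "Lc = (0, 0, 1)"

definition Leq :: "nat \<Rightarrow> nat \<Rightarrow> lat \<Rightarrow> lat \<Rightarrow> bool" where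
  "Leq p q l m \<longleftrightarrow> (\<exists>k1 k2 :: int.
      fst l - fst m = k1 * int p \<and>
      fst (snd l) - fst (snd m) = k1 + k2 * int q \<and>
      snd (snd l) - snd (snd m) = - k1 - k2)"

definition mdeg :: "nat \<Rightarrow> nat \<Rightarrow> lat" where
  "mdeg i j = ladd (lsmul (int i) Lx) (lsmul (int j) Ly)"

definition homog :: "nat \<Rightarrow> nat \<Rightarrow> lat \<Rightarrow> bpoly \<Rightarrow> bool" where
  "homog p q l P \<longleftrightarrow> (\<forall>i j. coeff (coeff P j) i \<noteq> 0 \<longrightarrow> Leq p q (mdeg i j) l)"

text \<open>A rank-one L-graded matrix factorisation
  S(a) --u--> S(b) --v--> S(a + c),  with u of degree b - a, v of degree a + c - b, u v = W.
  The corresponding module is the cokernel of v : S(b) -> S(a+c).\<close>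

datatype mf = MF (src: lat) (tgt: lat) (phi0: bpoly) (phi1: bpoly)

definition is_mf :: "nat \<Rightarrow> nat \<Rightarrow> mf \<Rightarrow> bool" where
  "is_mf p q X \<longleftrightarrow> homog p q (lsub (tgt X) (src X)) (phi0 X)
      \<and> homog p q (lsub (ladd (src X) Lc) (tgt X)) (phi1 X)
      \<and> phi0 X * phi1 X = Wpoly p q"

definition twist :: "lat \<Rightarrow> mf \<Rightarrow> mf" where
  "twist l X = MF (ladd (src X) l) (ladd (tgt X) l) (phi0 X) (phi1 X)"

definition shift1 :: "mf \<Rightarrow> mf" where
  "shift1 X = MF (tgt X) (ladd (src X) Lc) (- phi1 X) (- phi0 X)"

definition unshift1 :: "mf \<Rightarrow> mf" where
  "unshift1 X = MF (lsub (tgt X) Lc) (src X) (- phi1 X) (- phi0 X)"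

definition shiftn :: "int \<Rightarrow> mf \<Rightarrow> mf" where
  "shiftn n X = (if n \<ge> 0 then (shift1 ^^ nat n) X else (unshift1 ^^ nat (- n)) X)"

definition is_mor :: "nat \<Rightarrow> nat \<Rightarrow> mf \<Rightarrow> mf \<Rightarrow> bpoly \<Rightarrow> bpoly \<Rightarrow> bool" where
  "is_mor p q X Y F0 F1 \<longleftrightarrow>
      homog p q (lsub (src Y) (src X)) F0 \<and> homog p q (lsub (tgt Y) (tgt X)) F1 \<and>
      phi0 Y * F0 = F1 * phi0 X \<and> phi1 Y * F1 = F0 * phi1 X"

definition nullhtp :: "nat \<Rightarrow> nat \<Rightarrow> mf \<Rightarrow> mf \<Rightarrow> bpoly \<Rightarrow> bpoly \<Rightarrow> bool" where
  "nullhtp p q X Y F0 F1 \<longleftrightarrow> (\<exists>h0 h1.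
      homog p q (lsub (lsub (tgt Y) Lc) (src X)) h0 \<and>
      homog p q (lsub (src Y) (tgt X)) h1 \<and>
      F0 = h1 * phi0 X + phi1 Y * h0 \<and>
      F1 = phi0 Y * h1 + h0 * phi1 X)"

definition hom_vanish :: "nat \<Rightarrow> nat \<Rightarrow> int \<Rightarrow> mf \<Rightarrow> mf \<Rightarrow> bool" where
  "hom_vanish p q n X Y \<longleftrightarrow>
     (\<forall>F0 F1. is_mor p q X (shiftn n Y) F0 F1 \<longrightarrow> nullhtp p q X (shiftn n Y) F0 F1)"

definition exceptional :: "nat \<Rightarrow> nat \<Rightarrow> mf \<Rightarrow> bool" where
  "exceptional p q X \<longleftrightarrow>
     (\<forall>n. n \<noteq> 0 \<longrightarrow> hom_vanish p q n X X) \<and>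
     (\<forall>F0 F1. is_mor p q X X F0 F1 \<longrightarrow>
        (\<exists>a::complex. nullhtp p q X X (F0 - [:[:a:]:]) (F1 - [:[:a:]:]))) \<and>
     \<not> nullhtp p q X X 1 1"

definition orthogonal :: "nat \<Rightarrow> nat \<Rightarrow> mf \<Rightarrow> mf \<Rightarrow> bool" where
  "orthogonal p q X Y \<longleftrightarrow> (\<forall>n. hom_vanish p q n X Y \<and> hom_vanish p q n Y X)"

text \<open>K_f = R/(f): cokernel of S(-c+y) --f--> S, with u = y.
      K_y = R/(y): cokernel of S(-y) --y--> S, with u = f.\<close>
definition Kf :: "nat \<Rightarrow> nat \<Rightarrow> mf" where
  "Kf p q = MF (lneg Lc) (ladd (lneg Lc) Ly) Yv (fpoly p q)"

definition Ky :: "nat \<Rightarrow> nat \<Rightarrow> mf" where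
  "Ky p q = MF (lneg Lc) (lneg Ly) (fpoly p q) Yv"

definition Kyj :: "nat \<Rightarrow> nat \<Rightarrow> nat \<Rightarrow> mf" where
  "Kyj p q j = twist (lsmul (int j + 1 - int q) Ly) (Ky p q)"

end

theory Submission
  imports Defs
begin

lemma Yv_pow: "Yv ^ n = monom 1 n" by (simp add: Yv_def monom_power)
lemma Xv_pow: "Xv ^ n = [:monom 1 n:]"
  by (induction n) (simp_all add: Xv_def mult_monom)

lemma fpoly_coeff0: "q \<ge> 2 \<Longrightarrow> coeff (fpoly p q) 0 = monom 1 p"
  by (simp add: fpoly_def Xv_pow Yv_pow)

lemma yfac: "coeff P 0 = 0 \<Longrightarrow> P = Yv * poly_shift 1 P"
  by (rule poly_eqI) (auto simp: Yv_def coeff_monom_mult coeff_poly_shift)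

lemma Yv_nz: "Yv \<noteq> 0" by (simp add: Yv_def)

lemma Leq_eqI: "fst l = fst m \<Longrightarrow> fst (snd l) = fst (snd m) \<Longrightarrow> snd (snd l) = snd (snd m) \<Longrightarrow> Leq p q l m"
  unfolding Leq_def by (rule exI[of _ 0], rule exI[of _ 0]) simp

lemma L2: assumes "Leq p q (mdeg i (Suc j)) d" "Leq p q a (lsub d Ly)" shows "Leq p q (mdeg i j) a"
proof -
  obtain k1 k2 m1 m2 where h: "fst (mdeg i (Suc j)) - fst d = k1 * int p"
      "fst (snd (mdeg i (Suc j))) - fst (snd d) = k1 + k2 * int q"
      "snd (snd (mdeg i (Suc j))) - snd (snd d) = - k1 - k2"
      "fst a - fst (lsub d Ly) = m1 * int p"
      "fst (snd a) - fst (snd (lsub d Ly)) = m1 + m2 * int q"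
      "snd (snd a) - snd (snd (lsub d Ly)) = - m1 - m2"
    using assms unfolding Leq_def by blast
  show ?thesis unfolding Leq_def
    apply (rule exI[of _ "k1 - m1"], rule exI[of _ "k2 - m2"])
    using h by (simp add: mdeg_def ladd_def lsub_def lneg_def lsmul_def Lx_def Ly_def algebra_simps)
qed

lemma L1: assumes "Leq p q (mdeg (i+p) 0) d" "Leq p q b (ladd (lsub d Lc) Ly)" shows "Leq p q (mdeg i 0) b"
proof -
  obtain k1 k2 m1 m2 where h: "fst (mdeg (i+p) 0) - fst d = k1 * int p"
      "fst (snd (mdeg (i+p) 0)) - fst (snd d) = k1 + k2 * int q"
      "snd (snd (mdeg (i+p) 0)) - snd (snd d) = - k1 - k2"
      "fst b - fst (ladd (lsub d Lc) Ly) = m1 * int p"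
      "fst (snd b) - fst (snd (ladd (lsub d Lc) Ly)) = m1 + m2 * int q"
      "snd (snd b) - snd (snd (ladd (lsub d Lc) Ly)) = - m1 - m2"
    using assms unfolding Leq_def by blast
  show ?thesis unfolding Leq_def
    apply (rule exI[of _ "k1 - 1 - m1"], rule exI[of _ "k2 - m2"])
    using h by (simp add: mdeg_def ladd_def lsub_def lneg_def lsmul_def Lx_def Ly_def Lc_def algebra_simps)
qed

lemma L3: assumes "q \<ge> 2" "Leq p q (mdeg (i+p) 0) d" "Leq p q a (lsub d Ly)" shows "Leq p q (mdeg i (q-2)) a"
proof -
  obtain k1 k2 m1 m2 where h: "fst (mdeg (i+p) 0) - fst d = k1 * int p"
      "fst (snd (mdeg (i+p) 0)) - fst (snd d) = k1 + k2 * int q"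
      "snd (snd (mdeg (i+p) 0)) - snd (snd d) = - k1 - k2"
      "fst a - fst (lsub d Ly) = m1 * int p"
      "fst (snd a) - fst (snd (lsub d Ly)) = m1 + m2 * int q"
      "snd (snd a) - snd (snd (lsub d Ly)) = - m1 - m2"
    using assms unfolding Leq_def by blast
  have qq: "int (q - 2) = int q - 2" using assms(1) by simp
  show ?thesis unfolding Leq_def
    apply (rule exI[of _ "k1 - 1 - m1"], rule exI[of _ "k2 + 1 - m2"])
    using h qq by (simp add: mdeg_def ladd_def lsub_def lneg_def lsmul_def Lx_def Ly_def Lc_def algebra_simps)
qed


lemma homog_0: "homog p q l 0" by (simp add: homog_def)
lemma homog_uminus: "homog p q l P \<Longrightarrow> homog p q l (-P)" by (simp add: homog_def)

lemma homog_Yv: assumes "homog p q l (Yv * g)" "Leq p q m (lsub l Ly)" shows "homog p q m g"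
  unfolding homog_def
proof (intro allI impI)
  fix i j assume "coeff (coeff g j) i \<noteq> 0"
  hence "coeff (coeff (Yv * g) (Suc j)) i \<noteq> 0" by (simp add: Yv_def coeff_monom_mult)
  hence "Leq p q (mdeg i (Suc j)) l" using assms(1) unfolding homog_def by blast
  thus "Leq p q (mdeg i j) m" using L2 assms(2) by blast
qed

lemma core:
  assumes q2: "q \<ge> 2" and hg: "homog p q d g" and nd: "\<forall>i<p. \<not> Leq p q (mdeg i 0) d"
    and ha: "Leq p q a (lsub d Ly)" and hb: "Leq p q b (ladd (lsub d Lc) Ly)"
  shows "\<exists>A B. homog p q a A \<and> homog p q b B \<and> g = A * Yv + fpoly p q * B"
proof -
  define g0 where "g0 = coeff g 0"
  define r where "r = poly_shift p g0"
  define g' where "g' = poly_shift 1 g"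
  have g0z: "coeff g0 k = 0" if "k < p" for k
  proof (rule ccontr)
    assume "coeff g0 k \<noteq> 0"
    hence "Leq p q (mdeg k 0) d" using hg unfolding homog_def g0_def by blast
    thus False using nd that by blast
  qed
  have g0r: "g0 = monom 1 p * r"
    by (rule poly_eqI) (auto simp: coeff_monom_mult r_def coeff_poly_shift g0z)
  have gdec: "g = [:g0:] + Yv * g'"
    by (rule poly_eqI) (auto simp: Yv_def coeff_monom_mult coeff_poly_shift g'_def g0_def coeff_pCons split: nat.split)
  define A where "A = g' - monom r (q-2)"
  define B where "B = [:r:]"
  have eq: "g = A * Yv + fpoly p q * B"
  proof -
    have qs: "Suc (q - 2) = q - 1" using q2 by simp
    have m1: "monom r (q-2) * Yv = monom r (q-1)" using q2
      by (simp add: Yv_def mult_monom qs)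
    have m2: "Yv ^ (q-1) * [:r:] = monom r (q-1)"
      by (simp add: Yv_pow monom_0[symmetric] mult_monom del: monom_0)
    have m3: "Xv ^ p * [:r:] = [:g0:]" by (simp add: Xv_pow g0r)
    have "A * Yv + fpoly p q * B = g' * Yv - monom r (q-2) * Yv + Xv ^ p * [:r:] + Yv ^ (q-1) * [:r:]"
      by (simp add: A_def B_def fpoly_def algebra_simps)
    also have "\<dots> = g" using m1 m2 m3 gdec by (simp add: algebra_simps)
    finally show ?thesis by simp
  qed
  have hB: "homog p q b B" unfolding homog_def
  proof (intro allI impI)
    fix i j assume nz: "coeff (coeff B j) i \<noteq> 0"
    hence j0: "j = 0" by (auto simp: B_def coeff_pCons split: nat.splits)
    hence "coeff (coeff g 0) (i + p) \<noteq> 0" using nz by (simp add: B_def r_def g0_def coeff_poly_shift)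
    hence "Leq p q (mdeg (i+p) 0) d" using hg unfolding homog_def by blast
    thus "Leq p q (mdeg i j) b" using L1 hb j0 by blast
  qed
  have hA: "homog p q a A" unfolding homog_def
  proof (intro allI impI)
    fix i j assume nz: "coeff (coeff A j) i \<noteq> 0"
    hence "coeff (coeff g (Suc j)) i \<noteq> 0 \<or> (j = q - 2 \<and> coeff r i \<noteq> 0)"
      by (auto simp: A_def g'_def coeff_poly_shift split: if_splits)
    thus "Leq p q (mdeg i j) a"
    proof
      assume "coeff (coeff g (Suc j)) i \<noteq> 0"
      hence "Leq p q (mdeg i (Suc j)) d" using hg unfolding homog_def by blast
      thus ?thesis using L2 ha by blast
    next
      assume h: "j = q - 2 \<and> coeff r i \<noteq> 0"
      hence "coeff (coeff g 0) (i + p) \<noteq> 0" by (simp add: r_def g0_def coeff_poly_shift)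
      hence "Leq p q (mdeg (i+p) 0) d" using hg unfolding homog_def by blast
      thus ?thesis using L3 q2 ha h by blast
    qed
  qed
  show ?thesis using hA hB eq by blast
qed


lemma EE: "E = 1 \<or> E = -1 \<Longrightarrow> E * E = (1::bpoly)" by auto

lemma monom1p_nz: "monom (1::complex) p \<noteq> 0" by simp

lemma ST1:
  assumes q2: "q \<ge> 2" and E: "E = 1 \<or> E = -1"
    and mor: "is_mor p q (MF a1 b1 Yv (fpoly p q)) (MF a2 b2 (E * fpoly p q) (E * Yv)) F0 F1"
    and dg: "Leq p q (lsub a2 b1) (lsub (lsub a2 a1) Ly)"
  shows "nullhtp p q (MF a1 b1 Yv (fpoly p q)) (MF a2 b2 (E * fpoly p q) (E * Yv)) F0 F1"
proof -
  have e1: "E * fpoly p q * F0 = F1 * Yv" and hF0: "homog p q (lsub a2 a1) F0"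
    using mor by (auto simp: is_mor_def)
  have "E * (E * fpoly p q * F0) = E * (F1 * Yv)" using e1 by simp
  hence e2: "fpoly p q * F0 = E * F1 * Yv" using EE[OF E] by (simp add: mult.assoc[symmetric])
  have "coeff (fpoly p q * F0) 0 = coeff (E * F1 * Yv) 0" using e2 by simp
  hence "monom 1 p * coeff F0 0 = 0" by (simp add: coeff_mult_0 fpoly_coeff0[OF q2] Yv_def)
  hence c0: "coeff F0 0 = 0" by simp
  define g where "g = poly_shift 1 F0"
  have F0g: "F0 = Yv * g" using yfac[OF c0] g_def by simp
  have "(E * fpoly p q * g) * Yv = F1 * Yv" using e1 F0g by (simp add: algebra_simps)
  hence F1g: "F1 = E * fpoly p q * g" using Yv_nz by simp
  have hg: "homog p q (lsub a2 b1) g" using homog_Yv[of p q "lsub a2 a1" g] hF0 F0g dg by simp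
  show ?thesis unfolding nullhtp_def
    apply (rule exI[of _ 0], rule exI[of _ g])
    using hg F0g F1g by (simp add: homog_0 algebra_simps)
qed

lemma ST2:
  assumes q2: "q \<ge> 2"
    and mor: "is_mor p q (MF a1 b1 (fpoly p q) Yv) (MF a2 b2 Yv (fpoly p q)) F0 F1"
    and dg: "Leq p q (lsub (lsub b2 Lc) a1) (lsub (lsub b2 b1) Ly)"
  shows "nullhtp p q (MF a1 b1 (fpoly p q) Yv) (MF a2 b2 Yv (fpoly p q)) F0 F1"
proof -
  have e1: "Yv * F0 = F1 * fpoly p q" and e2: "fpoly p q * F1 = F0 * Yv"
    and hF1: "homog p q (lsub b2 b1) F1"
    using mor by (auto simp: is_mor_def)
  have "coeff (fpoly p q * F1) 0 = coeff (F0 * Yv) 0" using e2 by simp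
  hence "monom 1 p * coeff F1 0 = 0" by (simp add: coeff_mult_0 fpoly_coeff0[OF q2] Yv_def)
  hence c0: "coeff F1 0 = 0" by simp
  define g where "g = poly_shift 1 F1"
  have F1g: "F1 = Yv * g" using yfac[OF c0] g_def by simp
  have "Yv * F0 = Yv * (fpoly p q * g)" using e1 F1g by (simp add: algebra_simps)
  hence F0g: "F0 = fpoly p q * g" using Yv_nz by simp
  have hg: "homog p q (lsub (lsub b2 Lc) a1) g" using homog_Yv[of p q "lsub b2 b1" g] hF1 F1g dg by simp
  show ?thesis unfolding nullhtp_def
    apply (rule exI[of _ g], rule exI[of _ 0])
    using hg F0g F1g by (simp add: homog_0 algebra_simps)
qed

lemma S12:
  assumes q2: "q \<ge> 2" and E: "E = 1 \<or> E = -1"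
    and mor: "is_mor p q (MF a1 b1 Yv (fpoly p q)) (MF a2 b2 (E * Yv) (E * fpoly p q)) F0 F1"
    and nd: "\<forall>i<p. \<not> Leq p q (mdeg i 0) (lsub a2 a1)"
    and ha: "Leq p q (lsub a2 b1) (lsub (lsub a2 a1) Ly)"
    and hb: "Leq p q (lsub (lsub b2 Lc) a1) (ladd (lsub (lsub a2 a1) Lc) Ly)"
  shows "nullhtp p q (MF a1 b1 Yv (fpoly p q)) (MF a2 b2 (E * Yv) (E * fpoly p q)) F0 F1"
proof -
  have e1: "E * Yv * F0 = F1 * Yv" and hF0: "homog p q (lsub a2 a1) F0"
    using mor by (auto simp: is_mor_def)
  have F1: "F1 = E * F0" using e1 Yv_nz by (simp add: algebra_simps)
  obtain A B where AB: "homog p q (lsub a2 b1) A" "homog p q (lsub (lsub b2 Lc) a1) B"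
     "F0 = A * Yv + fpoly p q * B" using core[OF q2 hF0 nd ha hb] by blast
  have hEB: "homog p q (lsub (lsub b2 Lc) a1) (E * B)" using E AB(2) homog_uminus[OF AB(2)] by auto
  have "F0 = A * Yv + E * fpoly p q * (E * B)"
    using AB(3) EE[OF E] by (metis (no_types, lifting) mult.assoc mult.commute mult.left_neutral)
  moreover have "F1 = E * Yv * A + E * B * fpoly p q" using F1 AB(3) by (simp add: algebra_simps)
  ultimately show ?thesis unfolding nullhtp_def
    using AB(1) hEB by (intro exI[of _ "E * B"] exI[of _ A]) simp
qed

lemma S3:
  assumes q2: "q \<ge> 2"
    and mor: "is_mor p q (MF a1 b1 (fpoly p q) Yv) (MF a2 b2 (- fpoly p q) (- Yv)) F0 F1"
    and nd: "\<forall>i<p. \<not> Leq p q (mdeg i 0) (lsub a2 a1)"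
    and ha: "Leq p q (lsub (lsub b2 Lc) a1) (lsub (lsub a2 a1) Ly)"
    and hb: "Leq p q (lsub a2 b1) (ladd (lsub (lsub a2 a1) Lc) Ly)"
  shows "nullhtp p q (MF a1 b1 (fpoly p q) Yv) (MF a2 b2 (- fpoly p q) (- Yv)) F0 F1"
proof -
  have e1: "- fpoly p q * F0 = F1 * fpoly p q" and hF0: "homog p q (lsub a2 a1) F0"
    using mor by (auto simp: is_mor_def)
  have fnz: "fpoly p q \<noteq> 0"
  proof
    assume "fpoly p q = 0"
    hence "coeff (fpoly p q) 0 = 0" by simp
    thus False using fpoly_coeff0[OF q2] by simp
  qed
  have "(- F0) * fpoly p q = F1 * fpoly p q" using e1 by (simp add: algebra_simps)
  hence F1: "F1 = - F0" using fnz by (simp only: mult_cancel_right) simp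
  obtain A B where AB: "homog p q (lsub (lsub b2 Lc) a1) A" "homog p q (lsub a2 b1) B"
     "F0 = A * Yv + fpoly p q * B" using core[OF q2 hF0 nd ha hb] by blast
  show ?thesis unfolding nullhtp_def
    using AB F1 homog_uminus[OF AB(1)]
    by (intro exI[of _ "- A"] exI[of _ B]) (simp add: algebra_simps)
qed


definition shf :: "int \<Rightarrow> mf \<Rightarrow> mf" where
  "shf n X = (if even n then MF (ladd (src X) (lsmul (n div 2) Lc)) (ladd (tgt X) (lsmul (n div 2) Lc)) (phi0 X) (phi1 X)
     else MF (ladd (tgt X) (lsmul (n div 2) Lc)) (ladd (src X) (lsmul (n div 2 + 1) Lc)) (- phi1 X) (- phi0 X))"

lemma shf0: "shf 0 X = X"
  by (cases X) (simp add: shf_def ladd_def lsmul_def Lc_def)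

lemma shf_even: "shf (2*k) X = MF (ladd (src X) (lsmul k Lc)) (ladd (tgt X) (lsmul k Lc)) (phi0 X) (phi1 X)"
  by (simp add: shf_def)

lemma shf_odd: "shf (2*k+1) X = MF (ladd (tgt X) (lsmul k Lc)) (ladd (src X) (lsmul (k+1) Lc)) (- phi1 X) (- phi0 X)"
  by (simp add: shf_def)

lemma shf_suc: "shift1 (shf n X) = shf (n+1) X"
proof -
  obtain k where "n = 2*k \<or> n = 2*k+1" by (metis evenE oddE)
  thus ?thesis
  proof
    assume n: "n = 2*k"
    have "n + 1 = 2*k+1" using n by simp
    thus ?thesis using n by (simp only: shf_even shf_odd) (simp add: shift1_def ladd_def lsmul_def Lc_def algebra_simps)
  next
    assume n: "n = 2*k+1"
    have "n + 1 = 2*(k+1)" using n by simp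
    thus ?thesis using n by (simp only: shf_even shf_odd) (simp add: shift1_def ladd_def lsmul_def Lc_def algebra_simps)
  qed
qed

lemma shf_pred: "unshift1 (shf n X) = shf (n-1) X"
proof -
  obtain k where "n = 2*k \<or> n = 2*k+1" by (metis evenE oddE)
  thus ?thesis
  proof
    assume n: "n = 2*k"
    have "n - 1 = 2*(k-1)+1" using n by simp
    thus ?thesis using n by (simp only: shf_even shf_odd) (simp add: unshift1_def lsub_def lneg_def ladd_def lsmul_def Lc_def algebra_simps)
  next
    assume n: "n = 2*k+1"
    have "n - 1 = 2*k" using n by simp
    thus ?thesis using n by (simp only: shf_even shf_odd) (simp add: unshift1_def lsub_def lneg_def ladd_def lsmul_def Lc_def algebra_simps)
  qed
qed

lemma shiftn_shf: "shiftn n X = shf n X"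
proof -
  have a: "(shift1 ^^ m) X = shf (int m) X" for m
    by (induction m) (simp_all add: shf0 shf_suc add.commute)
  have b: "(unshift1 ^^ m) X = shf (- int m) X" for m
    proof (induction m)
      case (Suc m) have "- int (Suc m) = - int m - 1" by simp
      then show ?case by (simp only: funpow.simps o_apply Suc.IH shf_pred)
    qed (simp add: shf0)
  show ?thesis by (simp add: shiftn_def a b)
qed

lemma shiftn_even: "shiftn (2*k) X = MF (ladd (src X) (lsmul k Lc)) (ladd (tgt X) (lsmul k Lc)) (phi0 X) (phi1 X)"
  by (simp add: shiftn_shf shf_even)

lemma shiftn_odd: "shiftn (2*k+1) X = MF (ladd (tgt X) (lsmul k Lc)) (ladd (src X) (lsmul (k+1) Lc)) (- phi1 X) (- phi0 X)"
  by (simp add: shiftn_shf shf_odd)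

lemma const_homog:
  assumes "homog p q d F" "\<forall>i j. Leq p q (mdeg i j) d \<longrightarrow> i = 0 \<and> j = 0"
  shows "F = [:[:coeff (coeff F 0) 0:]:]"
proof (rule poly_eqI)
  fix j
  show "coeff F j = coeff [:[:coeff (coeff F 0) 0:]:] j"
  proof (rule poly_eqI)
    fix i
    show "coeff (coeff F j) i = coeff (coeff [:[:coeff (coeff F 0) 0:]:] j) i"
    proof (cases "coeff (coeff F j) i = 0")
      case True
      then show ?thesis by (auto simp: coeff_pCons split: nat.splits)
    next
      case False
      hence "i = 0 \<and> j = 0" using assms unfolding homog_def by blast
      thus ?thesis by simp
    qed
  qed
qed


lemma S12p:
  assumes "q \<ge> 2" "is_mor p q (MF a1 b1 Yv (fpoly p q)) (MF a2 b2 Yv (fpoly p q)) F0 F1"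
    "\<forall>i<p. \<not> Leq p q (mdeg i 0) (lsub a2 a1)"
    "Leq p q (lsub a2 b1) (lsub (lsub a2 a1) Ly)"
    "Leq p q (lsub (lsub b2 Lc) a1) (ladd (lsub (lsub a2 a1) Lc) Ly)"
  shows "nullhtp p q (MF a1 b1 Yv (fpoly p q)) (MF a2 b2 Yv (fpoly p q)) F0 F1"
  using S12[of q 1 p a1 b1 a2 b2 F0 F1] assms by simp

lemma S12m:
  assumes "q \<ge> 2" "is_mor p q (MF a1 b1 Yv (fpoly p q)) (MF a2 b2 (- Yv) (- fpoly p q)) F0 F1"
    "\<forall>i<p. \<not> Leq p q (mdeg i 0) (lsub a2 a1)"
    "Leq p q (lsub a2 b1) (lsub (lsub a2 a1) Ly)"
    "Leq p q (lsub (lsub b2 Lc) a1) (ladd (lsub (lsub a2 a1) Lc) Ly)"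
  shows "nullhtp p q (MF a1 b1 Yv (fpoly p q)) (MF a2 b2 (- Yv) (- fpoly p q)) F0 F1"
  using S12[of q "-1" p a1 b1 a2 b2 F0 F1] assms by simp

lemma ST1p:
  assumes "q \<ge> 2" "is_mor p q (MF a1 b1 Yv (fpoly p q)) (MF a2 b2 (fpoly p q) Yv) F0 F1"
    "Leq p q (lsub a2 b1) (lsub (lsub a2 a1) Ly)"
  shows "nullhtp p q (MF a1 b1 Yv (fpoly p q)) (MF a2 b2 (fpoly p q) Yv) F0 F1"
  using ST1[of q 1 p a1 b1 a2 b2 F0 F1] assms by simp

lemma ST1m:
  assumes "q \<ge> 2" "is_mor p q (MF a1 b1 Yv (fpoly p q)) (MF a2 b2 (- fpoly p q) (- Yv)) F0 F1"
    "Leq p q (lsub a2 b1) (lsub (lsub a2 a1) Ly)"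
  shows "nullhtp p q (MF a1 b1 Yv (fpoly p q)) (MF a2 b2 (- fpoly p q) (- Yv)) F0 F1"
  using ST1[of q "-1" p a1 b1 a2 b2 F0 F1] assms by simp

lemma small_mult: assumes "int i = k * int p" "i < p" shows "k = 0"
proof -
  have pp: "int p > 0" using assms by simp
  have "0 \<le> k * int p" using assms by simp
  hence "0 \<le> k" using pp by (simp add: zero_le_mult_iff)
  moreover have "k < 1"
  proof (rule ccontr)
    assume "\<not> k < 1"
    hence "int p \<le> k * int p" using mult_right_mono[of 1 k "int p"] by simp
    thus False using assms by linarith
  qed
  ultimately show ?thesis by simp
qed

lemma qhelper: assumes "k * int q = m" "0 < m" "m < int q" shows False
proof (cases "k \<ge> 1")
  case True
  hence "int q \<le> k * int q" using mult_right_mono[of 1 k "int q"] by simp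
  thus False using assms by linarith
next
  case False
  hence "k \<le> 0" by simp
  hence "k * int q \<le> 0" by (simp add: mult_nonpos_nonneg)
  thus False using assms by simp
qed


lemmas lat_defs = ladd_def lsub_def lneg_def lsmul_def Lx_def Ly_def Lc_def mdeg_def

lemma partA_even:
  assumes q2: "q \<ge> 2" and k0: "k \<noteq> 0"
  shows "hom_vanish p q (2*k) (Kf p q) (Kf p q)"
  unfolding hom_vanish_def shiftn_even Kf_def mf.sel
  apply (intro allI impI)
  apply (rule S12p[OF q2], assumption)
  subgoal
  proof (intro allI impI notI)
    fix i assume i: "i < p" and "Leq p q (mdeg i 0) (lsub (ladd (lneg Lc) (lsmul k Lc)) (lneg Lc))"
    then obtain k1 k2 where h: "int i = k1 * int p" "0 = k1 + k2 * int q" "- k = - k1 - k2"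
      unfolding Leq_def by (auto simp: lat_defs)
    have "k1 = 0" using small_mult[OF h(1) i] .
    hence "k2 * int q = 0" using h by simp
    hence "k2 = 0" using q2 by simp
    thus False using h `k1 = 0` k0 by simp
  qed
  subgoal by (rule Leq_eqI) (simp_all add: lat_defs)
  subgoal by (rule Leq_eqI) (simp_all add: lat_defs)
  done

lemma partA_odd:
  assumes q2: "q \<ge> 2"
  shows "hom_vanish p q (2*k+1) (Kf p q) (Kf p q)"
  unfolding hom_vanish_def shiftn_odd Kf_def mf.sel
  apply (intro allI impI)
  apply (rule ST1m[OF q2], assumption)
  by (rule Leq_eqI) (simp_all add: lat_defs)

lemma partD_even:
  assumes q2: "q \<ge> 2"
  shows "hom_vanish p q (2*k) (Kf p q) (Kyj p q j)"
  unfolding hom_vanish_def shiftn_even Kf_def Kyj_def Ky_def twist_def mf.sel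
  apply (intro allI impI)
  apply (rule ST1p[OF q2], assumption)
  by (rule Leq_eqI) (simp_all add: lat_defs)

lemma partE_even:
  assumes q2: "q \<ge> 2"
  shows "hom_vanish p q (2*k) (Kyj p q j) (Kf p q)"
  unfolding hom_vanish_def shiftn_even Kf_def Kyj_def Ky_def twist_def mf.sel
  apply (intro allI impI)
  apply (rule ST2[OF q2], assumption)
  by (rule Leq_eqI) (simp_all add: lat_defs)

lemma partD_odd:
  assumes q2: "q \<ge> 2" and j: "1 \<le> j" "j \<le> q - 1"
  shows "hom_vanish p q (2*k+1) (Kf p q) (Kyj p q j)"
  unfolding hom_vanish_def shiftn_odd Kf_def Kyj_def Ky_def twist_def mf.sel
  apply (intro allI impI)
  apply (rule S12m[OF q2], assumption)
  subgoal
  proof (intro allI impI notI)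
    fix i assume i: "i < p" and "Leq p q (mdeg i 0) (lsub (ladd (ladd (lneg Ly) (lsmul (int j + 1 - int q) Ly)) (lsmul k Lc)) (lneg Lc))"
    then obtain k1 k2 where h: "int i = k1 * int p" "- (int j - int q) = k1 + k2 * int q"
      unfolding Leq_def by (auto simp: lat_defs algebra_simps)
    have "k1 = 0" using small_mult[OF h(1) i] .
    hence "k2 * int q = int q - int j" using h by simp
    thus False using qhelper[of k2 q "int q - int j"] j q2 by (simp add: less_le_trans[of _ "q - 1"]) arith
  qed
  subgoal by (rule Leq_eqI) (simp_all add: lat_defs)
  subgoal by (rule Leq_eqI) (simp_all add: lat_defs)
  done

lemma partE_odd:
  assumes q2: "q \<ge> 2" and j: "1 \<le> j" "j \<le> q - 1"
  shows "hom_vanish p q (2*k+1) (Kyj p q j) (Kf p q)"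
  unfolding hom_vanish_def shiftn_odd Kf_def Kyj_def Ky_def twist_def mf.sel
  apply (intro allI impI)
  apply (rule S3[OF q2], assumption)
  subgoal
  proof (intro allI impI notI)
    fix i assume i: "i < p" and "Leq p q (mdeg i 0) (lsub (ladd (ladd (lneg Lc) Ly) (lsmul k Lc)) (ladd (lneg Lc) (lsmul (int j + 1 - int q) Ly)))"
    then obtain k1 k2 where h: "int i = k1 * int p" "int j - int q = k1 + k2 * int q"
      unfolding Leq_def by (auto simp: lat_defs algebra_simps)
    have "k1 = 0" using small_mult[OF h(1) i] .
    hence "(- k2) * int q = int q - int j" using h by simp
    thus False using qhelper[of "- k2" q "int q - int j"] j q2 by (simp add: less_le_trans[of _ "q - 1"]) arith
  qed
  subgoal by (rule Leq_eqI) (simp_all add: lat_defs)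
  subgoal by (rule Leq_eqI) (simp_all add: lat_defs)
  done


lemma partB:
  assumes p2: "p \<ge> 2" and q2: "q \<ge> 2" and mor: "is_mor p q (Kf p q) (Kf p q) F0 F1"
  shows "\<exists>a::complex. nullhtp p q (Kf p q) (Kf p q) (F0 - [:[:a:]:]) (F1 - [:[:a:]:])"
proof -
  have e1: "Yv * F0 = F1 * Yv" and hF0: "homog p q (lsub (lneg Lc) (lneg Lc)) F0"
    using mor by (auto simp: is_mor_def Kf_def)
  have "Yv * F0 = Yv * F1" using e1 by (simp add: mult.commute)
  hence F1: "F1 = F0" using Yv_nz by simp
  have z: "i = 0 \<and> j = 0" if lq: "Leq p q (mdeg i j) (lsub (lneg Lc) (lneg Lc))" for i j
  proof -
    obtain k1 k2 where h0: "fst (mdeg i j) - fst (lsub (lneg Lc) (lneg Lc)) = k1 * int p"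
      "fst (snd (mdeg i j)) - fst (snd (lsub (lneg Lc) (lneg Lc))) = k1 + k2 * int q"
      "snd (snd (mdeg i j)) - snd (snd (lsub (lneg Lc) (lneg Lc))) = - k1 - k2"
      using lq unfolding Leq_def by blast
    have h: "int i = k1 * int p" "int j = k1 + k2 * int q" "- k1 = k2"
      using h0 by (simp_all add: lat_defs)
    have pp: "int p > 0" using p2 by simp
    have "0 \<le> k1 * int p" using h(1) by simp
    hence k1: "0 \<le> k1" using pp by (simp add: zero_le_mult_iff)
    have k2: "k2 = - k1" using h(3) by simp
    have "k1 * int q \<le> k1" using h(1,2) k2 by (simp add: algebra_simps)
    moreover have "k1 * 2 \<le> k1 * int q" using k1 q2 by (intro mult_left_mono) auto
    ultimately have "k1 = 0" using k1 by linarith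
    thus ?thesis using h(1,2) k2 by simp
  qed
  define a where "a = coeff (coeff F0 0) 0"
  have F0a: "F0 = [:[:a:]:]" using const_homog[OF hF0] z unfolding a_def by blast
  have z1: "F0 - [:[:coeff (coeff F0 0) 0:]:] = 0" and z2: "F1 - [:[:coeff (coeff F0 0) 0:]:] = 0"
    unfolding a_def[symmetric] using F1 F0a by simp_all
  have "nullhtp p q (Kf p q) (Kf p q) 0 0" unfolding nullhtp_def
    by (intro exI[of _ 0]) (simp add: homog_0)
  hence "nullhtp p q (Kf p q) (Kf p q) (F0 - [:[:coeff (coeff F0 0) 0:]:]) (F1 - [:[:coeff (coeff F0 0) 0:]:])"
    by (simp only: z1 z2)
  thus ?thesis by (rule exI)
qed

lemma partC:
  assumes p2: "p \<ge> 2" and q2: "q \<ge> 2"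
  shows "\<not> nullhtp p q (Kf p q) (Kf p q) 1 1"
proof
  assume "nullhtp p q (Kf p q) (Kf p q) 1 1"
  then obtain h0 h1 where e: "1 = h1 * Yv + fpoly p q * h0"
    unfolding nullhtp_def Kf_def by auto
  have "coeff (coeff (1::bpoly) 0) 0 = coeff (coeff (h1 * Yv + fpoly p q * h0) 0) 0"
    using e by simp
  also have "\<dots> = coeff (monom 1 p * coeff h0 0) 0"
    by (simp add: coeff_mult_0 fpoly_coeff0[OF q2] Yv_def)
  also have "\<dots> = 0" using p2 by (simp add: coeff_monom_mult)
  finally show False by simp
qed

theorem lemma4p3:
  fixes p q :: nat
  assumes "p \<ge> 2" and "q \<ge> 2"
  shows "exceptional p q (Kf p q) \<and>
         (\<forall>j. 1 \<le> j \<and> j \<le> q - 1 \<longrightarrow> orthogonal p q (Kf p q) (Kyj p q j))"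
proof -
  have A: "hom_vanish p q n (Kf p q) (Kf p q)" if "n \<noteq> 0" for n
  proof -
    obtain k where "n = 2*k \<or> n = 2*k+1" by (metis evenE oddE)
    thus ?thesis
    proof
      assume n: "n = 2*k"
      hence "k \<noteq> 0" using that by simp
      thus ?thesis using partA_even[OF assms(2)] n by simp
    next
      assume n: "n = 2*k+1"
      thus ?thesis using partA_odd[OF assms(2)] by simp
    qed
  qed
  have O: "orthogonal p q (Kf p q) (Kyj p q j)" if j: "1 \<le> j" "j \<le> q - 1" for j
    unfolding orthogonal_def
  proof
    fix n :: int
    obtain k where "n = 2*k \<or> n = 2*k+1" by (metis evenE oddE)
    thus "hom_vanish p q n (Kf p q) (Kyj p q j) \<and> hom_vanish p q n (Kyj p q j) (Kf p q)"
    proof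
      assume n: "n = 2*k"
      show ?thesis unfolding n using partD_even[OF assms(2)] partE_even[OF assms(2)] by (intro conjI)
    next
      assume n: "n = 2*k+1"
      show ?thesis unfolding n using partD_odd[OF assms(2) j] partE_odd[OF assms(2) j] by (intro conjI)
    qed
  qed
  have E: "exceptional p q (Kf p q)" unfolding exceptional_def
    using A partB[OF assms] partC[OF assms] by blast
  show ?thesis using E O by blast
qed

end
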